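(* For every $k\ge 2$, the odd graph $O_k$ has no quantum symmetry, i.e. $C(G_{aut}^+(O_k))$ is commutative.
   Context: The odd graph $O_k$ ($k\ge2$) has as vertices the $(k-1)$-element subsets of $\{1,\dots,2k-1\}$, two vertices being adjacent iff the subsets are disjoint. For a finite simple undirected graph $\Gamma=(V,E)$ with $V=\{1,\dots,n\}$, $C(G_{aut}^+(\Gamma))$ is the universal unital $C^*$-algebra generated by $u_{ij}$, $1\le i,j\le n$, with relations: (R1) $u_{ij}=u_{ij}^*=u_{ij}^2$; (R2) $\sum_{l} u_{il}=1=\sum_{l} u_{li}$ for all $i$; (R3) $u_{ij}u_{kl}=u_{kl}u_{ij}=0$ whenever exactly one of $(i,k)\in E$, $(j,l)\in E$ holds. $\Gamma$ has no quantum symmetry if $C(G_{aut}^+(\Gamma))$ is commutative (equivalently $G_{aut}^+(\Gamma)=\mathrm{Aut}(\Gamma)$). *)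

theory Defs
  imports Complex_Main
begin

locale cstar_algebra =
  fixes smult :: "complex \<Rightarrow> 'a::ring_1 \<Rightarrow> 'a"
    and star :: "'a \<Rightarrow> 'a"
    and nrm :: "'a \<Rightarrow> real"
  assumes smult_add_right: "smult c (x + y) = smult c x + smult c y"
    and smult_add_left: "smult (c + d) x = smult c x + smult d x"
    and smult_smult: "smult c (smult d x) = smult (c * d) x"
    and smult_one: "smult 1 x = x"
    and smult_mult_left: "smult c (x * y) = smult c x * y"
    and smult_mult_right: "smult c (x * y) = x * smult c y"
    and nrm_eq_zero: "nrm x = 0 \<longleftrightarrow> x = 0"
    and nrm_nonneg: "0 \<le> nrm x"
    and nrm_triangle: "nrm (x + y) \<le> nrm x + nrm y"
    and nrm_smult: "nrm (smult c x) = cmod c * nrm x"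
    and nrm_mult: "nrm (x * y) \<le> nrm x * nrm y"
    and complete: "\<And>X. (\<forall>e>0. \<exists>N. \<forall>m\<ge>N. \<forall>n\<ge>N. nrm (X m - X n) < e)
                     \<Longrightarrow> (\<exists>L. (\<lambda>n. nrm (X n - L)) \<longlonglongrightarrow> 0)"
    and star_add: "star (x + y) = star x + star y"
    and star_smult: "star (smult c x) = smult (cnj c) (star x)"
    and star_mult: "star (x * y) = star y * star x"
    and star_star: "star (star x) = x"
    and cstar_identity: "nrm (star x * x) = nrm x ^ 2"

text \<open>A family (u i j) for i, j in V satisfying the defining relations (R1)-(R3) of
C(G_aut^+(Gamma)) for the graph Gamma = (V, E).\<close>

definition graph_magic_unitary ::
  "('a::ring_1 \<Rightarrow> 'a) \<Rightarrow> 'v set \<Rightarrow> ('v \<Rightarrow> 'v \<Rightarrow> bool) \<Rightarrow> ('v \<Rightarrow> 'v \<Rightarrow> 'a) \<Rightarrow> bool" where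
  "graph_magic_unitary star V E u \<longleftrightarrow>
     (\<forall>i\<in>V. \<forall>j\<in>V. u i j = star (u i j) \<and> u i j = u i j * u i j) \<and>
     (\<forall>i\<in>V. (\<Sum>l\<in>V. u i l) = 1 \<and> (\<Sum>l\<in>V. u l i) = 1) \<and>
     (\<forall>i\<in>V. \<forall>j\<in>V. \<forall>k\<in>V. \<forall>l\<in>V. (E i k \<noteq> E j l) \<longrightarrow>
        u i j * u k l = 0 \<and> u k l * u i j = 0)"

definition odd_graph_vertices :: "nat \<Rightarrow> nat set set" where
  "odd_graph_vertices k = {A. A \<subseteq> {1..2*k-1} \<and> card A = k - 1}"

definition odd_graph_adj :: "nat set \<Rightarrow> nat set \<Rightarrow> bool" where
  "odd_graph_adj A B \<longleftrightarrow> A \<inter> B = {}"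

end

theory Submission
  imports Defs
begin

context cstar_algebra begin

lemma star_zero[simp]: "star 0 = 0"
proof -
  have "star (0 + 0) = star 0 + star 0" by (rule star_add)
  thus ?thesis by simp
qed

lemma star_one[simp]: "star 1 = 1"
proof -
  have "star (star 1 * 1) = star 1 * star (star 1)" by (rule star_mult)
  hence "star (star 1) = star 1" by (simp add: star_star)
  thus ?thesis by (simp add: star_star)
qed

lemma star_uminus[simp]: "star (- x) = - star x"
proof -
  have "star (x + - x) = star x + star (- x)" by (rule star_add)
  hence "star x + star (- x) = 0" by simp
  thus ?thesis by (metis minus_unique)
qed

lemma star_diff[simp]: "star (x - y) = star x - star y"
  using star_add[of x "- y"] by simp

lemma star_sum: "star (sum f A) = sum (\<lambda>i. star (f i)) A"
  by (induction A rule: infinite_finite_induct) (auto simp: star_add)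

lemma E1: "star x * x = 0 \<Longrightarrow> x = 0"
proof -
  assume "star x * x = 0"
  hence "nrm (star x * x) = 0" using nrm_eq_zero by simp
  hence "nrm x ^ 2 = 0" using cstar_identity[of x] by simp
  hence "nrm x = 0" by simp
  thus ?thesis using nrm_eq_zero by simp
qed

lemma smult_zero_left: "smult 0 x = 0"
proof -
  have "smult (0 + 0) x = smult 0 x + smult 0 x" by (rule smult_add_left)
  thus ?thesis by simp
qed

lemma smult_zero_right: "smult c 0 = 0"
proof -
  have "smult c (0 + 0) = smult c 0 + smult c 0" by (rule smult_add_right)
  thus ?thesis by simp
qed

lemma smult_of_nat: "smult (of_nat j) (x::'a) = of_nat j * x"
proof (induction j)
  case 0 thus ?case by (simp add: smult_zero_left)
next
  case (Suc j)
  have "smult (of_nat (Suc j)) x = smult (1 + of_nat j) x" by simp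
  also have "\<dots> = x + of_nat j * x" by (simp add: smult_add_left smult_one Suc)
  finally show ?case by (simp add: algebra_simps)
qed

lemma nat_cancel: assumes "of_nat j * (x::'a) = 0" "j \<ge> 1" shows "x = 0"
proof -
  have "smult (1 / of_nat j) (smult (of_nat j) x) = smult (1 / of_nat j * of_nat j) x"
    by (rule smult_smult)
  also have "\<dots> = x" using assms(2) by (simp add: smult_one)
  finally have "x = smult (1 / of_nat j) (smult (of_nat j) x)" by simp
  also have "\<dots> = 0" using assms(1) by (simp add: smult_of_nat smult_zero_right)
  finally show ?thesis .
qed

lemma idem_left: "p * p = p \<Longrightarrow> p * (p * x) = p * (x::'a)"
  by (simp add: mult.assoc[symmetric])

lemma zero_left: "a * b = 0 \<Longrightarrow> a * (b * x) = (0::'a)"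
  by (simp add: mult.assoc[symmetric])

definition proj :: "'a \<Rightarrow> bool" where "proj p \<longleftrightarrow> star p = p \<and> p * p = p"

lemma selfadj_comm:
  assumes "star p = p" "star q = q" "p * q * p = p * q"
  shows "p * q = q * p"
proof -
  have "star (p * q * p) = p * q * p" using assms(1,2) by (simp add: star_mult mult.assoc)
  hence "star (p * q) = p * q" using assms(3) by simp
  thus ?thesis using assms(1,2) by (simp add: star_mult)
qed

lemma AL:
  fixes r s :: "'b \<Rightarrow> 'a"
  assumes fin: "finite S"
    and pr: "\<And>b. b \<in> S \<Longrightarrow> proj (r b)" and ps: "\<And>b. b \<in> S \<Longrightarrow> proj (s b)"
    and ro: "\<And>b b'. b \<in> S \<Longrightarrow> b' \<in> S \<Longrightarrow> b \<noteq> b' \<Longrightarrow> r b * r b' = 0"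
    and so: "\<And>b b'. b \<in> S \<Longrightarrow> b' \<in> S \<Longrightarrow> b \<noteq> b' \<Longrightarrow> s b * s b' = 0"
    and W1: "(\<Sum>b\<in>S. r b * s b) = Wv" and W2: "(\<Sum>b\<in>S. s b * r b) = Wv"
    and Wi: "Wv * Wv = Wv"
    and b0: "b0 \<in> S"
  shows "r b0 * s b0 = s b0 * r b0"
proof -
  define r0 where "r0 = r b0"
  define s0 where "s0 = s b0"
  have r0p: "star r0 = r0" "r0 * r0 = r0" using pr[OF b0] by (auto simp: proj_def r0_def)
  have s0p: "star s0 = s0" "s0 * s0 = s0" using ps[OF b0] by (auto simp: proj_def s0_def)
  define y where "y = s0 * r0 * s0"
  have sW: "s0 * Wv = s0 * r0"
  proof -
    have "s0 * Wv = (\<Sum>b\<in>S. s0 * (s b * r b))" by (simp add: W2[symmetric] sum_distrib_left)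
    also have "\<dots> = s0 * (s b0 * r b0) + (\<Sum>b\<in>S-{b0}. s0 * (s b * r b))"
      using fin b0 by (simp add: sum.remove)
    also have "(\<Sum>b\<in>S-{b0}. s0 * (s b * r b)) = 0"
    proof (rule sum.neutral, intro ballI)
      fix b assume "b \<in> S - {b0}"
      hence "s0 * s b = 0" using so b0 by (auto simp: s0_def)
      thus "s0 * (s b * r b) = 0" by (simp add: mult.assoc[symmetric])
    qed
    finally show ?thesis using s0p by (simp add: s0_def r0_def mult.assoc[symmetric])
  qed
  have srs: "(\<Sum>b\<in>S. s b * r b * s b) = Wv"
  proof -
    have "Wv = Wv * Wv" using Wi by simp
    also have "\<dots> = (\<Sum>b\<in>S. s b * r b) * (\<Sum>b'\<in>S. r b' * s b')"
      using W1 W2 by simp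
    also have "\<dots> = (\<Sum>b\<in>S. \<Sum>b'\<in>S. s b * r b * (r b' * s b'))"
      by (simp add: sum_distrib_left sum_distrib_right, rule sum.swap)
    also have "\<dots> = (\<Sum>b\<in>S. s b * r b * s b)"
    proof (rule sum.cong[OF refl])
      fix b assume bS: "b \<in> S"
      have "(\<Sum>b'\<in>S. s b * r b * (r b' * s b')) = s b * r b * (r b * s b) + (\<Sum>b'\<in>S-{b}. s b * r b * (r b' * s b'))"
        using fin bS by (simp add: sum.remove)
      also have "(\<Sum>b'\<in>S-{b}. s b * r b * (r b' * s b')) = 0"
      proof (rule sum.neutral, intro ballI)
        fix b' assume "b' \<in> S - {b}"
        hence "r b * r b' = 0" using ro bS by auto
        have "s b * r b * (r b' * s b') = s b * (r b * r b') * s b'" by (simp only: mult.assoc)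
        thus "s b * r b * (r b' * s b') = 0" using \<open>r b * r b' = 0\<close> by simp
      qed
      finally show "(\<Sum>b'\<in>S. s b * r b * (r b' * s b')) = s b * r b * s b"
        using pr[OF bS] by (simp add: proj_def mult.assoc idem_left)
    qed
    finally show ?thesis by simp
  qed
  have yr: "y * r0 = y * y"
  proof -
    have "y * r0 = s0 * r0 * (s0 * r0)" by (simp add: y_def mult.assoc)
    also have "\<dots> = s0 * r0 * (s0 * Wv)" by (simp add: sW)
    also have "\<dots> = y * Wv" by (simp add: y_def mult.assoc)
    also have "\<dots> = (\<Sum>b\<in>S. y * (s b * r b * s b))" by (simp add: srs[symmetric] sum_distrib_left)
    also have "\<dots> = y * (s b0 * r b0 * s b0) + (\<Sum>b\<in>S-{b0}. y * (s b * r b * s b))"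
      using fin b0 by (simp add: sum.remove)
    also have "(\<Sum>b\<in>S-{b0}. y * (s b * r b * s b)) = 0"
    proof (rule sum.neutral, intro ballI)
      fix b assume "b \<in> S - {b0}"
      hence "s0 * s b = 0" using so b0 by (auto simp: s0_def)
      thus "y * (s b * r b * s b) = 0" by (simp add: y_def mult.assoc zero_left)
    qed
    finally show ?thesis by (simp add: y_def r0_def s0_def)
  qed
  have y3: "y * (y * y) = y * y"
  proof -
    have "y * (y * y) = y * (y * r0)" by (simp add: yr)
    also have "\<dots> = (y * y) * r0" by (simp add: mult.assoc)
    also have "\<dots> = (y * r0) * r0" by (simp add: yr)
    also have "\<dots> = y * (r0 * r0)" by (simp add: mult.assoc)
    also have "\<dots> = y * y" by (simp add: r0p yr)
    finally show ?thesis .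
  qed
  define d where "d = y - y * y"
  have ys: "star y = y" by (simp add: y_def star_mult r0p s0p mult.assoc)
  have ds: "star d = d" by (simp add: d_def star_mult ys)
  have dd: "d * d = 0"
  proof -
    have "d * d = y * y - y * (y * y) - ((y * y) * y - (y * y) * (y * y))"
      by (simp add: d_def left_diff_distrib right_diff_distrib)
    also have "\<dots> = 0" by (simp add: mult.assoc y3)
    finally show ?thesis .
  qed
  have "star d * d = 0" using ds dd by simp
  hence "d = 0" by (rule E1)
  hence yy: "y * y = y" by (simp add: d_def)
  define x where "x = r0 * s0 - s0 * r0 * s0"
  have "star x * x = 0"
  proof -
    have "star x = s0 * r0 - s0 * r0 * s0" by (simp add: x_def star_mult r0p s0p mult.assoc)
    hence "star x * x = (s0 * r0 - s0 * r0 * s0) * (r0 * s0 - s0 * r0 * s0)" by (simp add: x_def)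
    also have "\<dots> = y - y * y"
      by (simp add: left_diff_distrib right_diff_distrib mult.assoc idem_left r0p s0p y_def)
    finally show ?thesis using yy by simp
  qed
  hence "x = 0" by (rule E1)
  hence rs: "r0 * s0 = y" by (simp add: x_def y_def)
  hence "star (r0 * s0) = star y" by simp
  hence "s0 * r0 = y" by (simp add: star_mult r0p s0p ys)
  with rs show ?thesis by (simp add: r0_def s0_def)
qed

end

locale OQ = cstar_algebra +
  fixes k :: nat and u :: "nat set \<Rightarrow> nat set \<Rightarrow> 'a"
  assumes k2: "2 \<le> k"
    and mu: "graph_magic_unitary star (odd_graph_vertices k) odd_graph_adj u"
begin

definition NN :: "nat set" where "NN = {1..2*k-1}"
definition VV :: "nat set set" where "VV = odd_graph_vertices k"
definition nb :: "nat \<Rightarrow> nat set \<Rightarrow> nat set" where "nb y B = NN - B - {y}"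

lemma finNN[simp]: "finite NN" by (simp add: NN_def)
lemma cardNN: "card NN = 2*k-1" by (simp add: NN_def)

lemma VV_iff: "A \<in> VV \<longleftrightarrow> A \<subseteq> NN \<and> card A = k - 1"
  by (simp add: VV_def odd_graph_vertices_def NN_def)

lemma VV_sub: "A \<in> VV \<Longrightarrow> A \<subseteq> NN" by (simp add: VV_iff)
lemma VV_card: "A \<in> VV \<Longrightarrow> card A = k - 1" by (simp add: VV_iff)
lemma VV_fin: "A \<in> VV \<Longrightarrow> finite A" using VV_sub finite_subset finNN by blast

lemma finVV[simp]: "finite VV"
proof -
  have "VV \<subseteq> Pow NN" using VV_sub by blast
  thus ?thesis using finite_subset[of VV "Pow NN"] by simp
qed

lemma nb_card: assumes "B \<in> VV" "y \<in> NN" "y \<notin> B" shows "card (nb y B) = k - 1"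
proof -
  have "card (NN - B) = card NN - card B" using assms VV_sub VV_fin by (simp add: card_Diff_subset)
  hence c1: "card (NN - B) = k" using cardNN VV_card[OF assms(1)] k2 by simp
  have "card (NN - B - {y}) = card (NN - B) - 1" using assms by (simp add: card_Diff_singleton)
  thus ?thesis using c1 by (simp add: nb_def)
qed

lemma nbV: assumes "B \<in> VV" "y \<in> NN" "y \<notin> B" shows "nb y B \<in> VV"
  using nb_card[OF assms] by (auto simp: VV_iff nb_def)

lemma nb_disj[simp]: "B \<inter> nb y B = {}" by (auto simp: nb_def)
lemma nb_disj'[simp]: "nb y B \<inter> B = {}" by (auto simp: nb_def)
lemma nb_y[simp]: "y \<notin> nb y B" by (simp add: nb_def)

lemma cardNNB: assumes "B \<in> VV" shows "card (NN - B) = k"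
proof -
  have "card (NN - B) = card NN - card B" using assms VV_sub VV_fin by (simp add: card_Diff_subset)
  thus ?thesis using cardNN VV_card[OF assms] k2 by simp
qed

lemma nb_unique:
  assumes "B \<in> VV" "D \<in> VV" "B \<inter> D = {}" "y \<in> NN" "y \<notin> B" "y \<notin> D"
  shows "D = nb y B"
proof -
  have "D \<subseteq> nb y B" using assms VV_sub by (auto simp: nb_def)
  moreover have "card D = card (nb y B)" using nb_card[OF assms(1,4,5)] VV_card[OF assms(2)] by simp
  moreover have "finite (nb y B)" by (simp add: nb_def)
  ultimately show ?thesis by (metis card_subset_eq)
qed

lemma nb_nb: assumes "B \<in> VV" "y \<in> NN" "y \<notin> B" shows "nb y (nb y B) = B"
  using assms VV_sub by (auto simp: nb_def)

lemma nb_inj_y: assumes "y \<in> NN - B" "y' \<in> NN - B" "nb y B = nb y' B" shows "y = y'"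
  using assms by (auto simp: nb_def)

lemma nb_inj_B: assumes "B \<in> VV" "B' \<in> VV" "y \<in> NN" "y \<notin> B" "y \<notin> B'" "nb y B = nb y B'"
  shows "B = B'"
proof -
  have "B = nb y (nb y B)" using nb_nb[OF assms(1,3,4)] by simp
  also have "\<dots> = nb y (nb y B')" using assms(6) by simp
  also have "\<dots> = B'" using nb_nb[OF assms(2,3,5)] by simp
  finally show ?thesis .
qed

lemma adj_label:
  assumes "B \<in> VV" "D \<in> VV" "B \<inter> D = {}"
  shows "\<exists>y\<in>NN. y \<notin> B \<and> y \<notin> D"
proof (rule ccontr)
  assume a: "\<not> (\<exists>y\<in>NN. y \<notin> B \<and> y \<notin> D)"
  have sub: "NN \<subseteq> B \<union> D"
  proof
    fix x assume "x \<in> NN" thus "x \<in> B \<union> D" using a by blast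
  qed
  have fB: "finite B" and fD: "finite D" using VV_fin assms(1,2) by auto
  have "card NN \<le> card (B \<union> D)" using sub fB fD by (simp add: card_mono)
  also have "\<dots> = card B + card D" using fB fD assms(3) by (simp add: card_Un_disjoint)
  finally have "card NN \<le> card B + card D" .
  thus False using cardNN VV_card[OF assms(1)] VV_card[OF assms(2)] k2 by simp
qed

lemma adj_nb:
  assumes "B \<in> VV" "D \<in> VV" "B \<inter> D = {}"
  shows "\<exists>y\<in>NN. y \<notin> B \<and> D = nb y B"
  using adj_label[OF assms] nb_unique[OF assms] by blast

definition NBs :: "nat set \<Rightarrow> nat set set" where "NBs B = {D \<in> VV. B \<inter> D = {}}"

lemma NBs_img: assumes "B \<in> VV" shows "NBs B = (\<lambda>y. nb y B) ` (NN - B)"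
proof
  show "NBs B \<subseteq> (\<lambda>y. nb y B) ` (NN - B)"
    using adj_nb[OF assms] by (auto simp: NBs_def)
  show "(\<lambda>y. nb y B) ` (NN - B) \<subseteq> NBs B"
    using nbV[OF assms] by (auto simp: NBs_def nb_def)
qed

lemma nb_inj_on: "inj_on (\<lambda>y. nb y B) (NN - B)"
  by (rule inj_onI) (rule nb_inj_y, auto)

lemma card_NBs: assumes "B \<in> VV" shows "card (NBs B) = k"
  using NBs_img[OF assms] card_image[OF nb_inj_on] cardNNB[OF assms] by simp

lemma NBs_y: assumes "B \<in> VV" "y \<in> NN" "y \<notin> B"
  shows "{D \<in> VV. B \<inter> D = {} \<and> y \<in> D} = (\<lambda>w. nb w B) ` (NN - B - {y})"
proof
  show "{D \<in> VV. B \<inter> D = {} \<and> y \<in> D} \<subseteq> (\<lambda>w. nb w B) ` (NN - B - {y})"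
  proof
    fix D assume D: "D \<in> {D \<in> VV. B \<inter> D = {} \<and> y \<in> D}"
    then obtain w where w: "w \<in> NN" "w \<notin> B" "D = nb w B" using adj_nb[OF assms(1)] by blast
    have "w \<noteq> y" using D w by auto
    thus "D \<in> (\<lambda>w. nb w B) ` (NN - B - {y})" using w by auto
  qed
  show "(\<lambda>w. nb w B) ` (NN - B - {y}) \<subseteq> {D \<in> VV. B \<inter> D = {} \<and> y \<in> D}"
    using nbV[OF assms(1)] assms by (auto simp: nb_def)
qed

lemma card_NBs_y: assumes "B \<in> VV" "y \<in> NN" "y \<notin> B"
  shows "card {D \<in> VV. B \<inter> D = {} \<and> y \<in> D} = k - 1"
proof -
  have "inj_on (\<lambda>w. nb w B) (NN - B - {y})" using nb_inj_on by (rule inj_on_subset) auto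
  hence "card {D \<in> VV. B \<inter> D = {} \<and> y \<in> D} = card (NN - B - {y})"
    using NBs_y[OF assms] card_image by metis
  also have "\<dots> = k - 1" using cardNNB[OF assms(1)] assms by (simp add: card_Diff_singleton)
  finally show ?thesis .
qed

lemma distinguish:
  assumes "B \<in> VV" "B' \<in> VV" "B \<noteq> B'"
  shows "\<exists>D\<in>VV. B \<inter> D = {} \<and> B' \<inter> D \<noteq> {}"
proof -
  have "\<not> B' \<subseteq> B"
  proof
    assume "B' \<subseteq> B"
    moreover have "card B' = card B" using assms VV_card by simp
    ultimately have "B' = B" using card_subset_eq[OF VV_fin[OF assms(1)]] by blast
    thus False using assms by simp
  qed
  then obtain b where b: "b \<in> B'" "b \<notin> B" by auto
  have "card (NN - B - {b}) \<ge> k - 1" using cardNNB[OF assms(1)] k2 by (simp add: card_Diff_singleton_if)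
  hence "card (NN - B - {b}) \<ge> 1" using k2 by linarith
  hence "0 < card (NN - B - {b})" by simp
  hence "NN - B - {b} \<noteq> {}" using card_gt_0_iff by blast
  then obtain w where w: "w \<in> NN" "w \<notin> B" "w \<noteq> b" by auto
  have "nb w B \<in> VV" using nbV[OF assms(1) w(1,2)] .
  moreover have "b \<in> nb w B" using b w VV_sub[OF assms(2)] by (auto simp: nb_def)
  ultimately show ?thesis using b by (intro bexI[of _ "nb w B"]) auto
qed

end

context OQ begin

lemma mu_unf:
  "\<forall>i\<in>VV. \<forall>j\<in>VV. u i j = star (u i j) \<and> u i j = u i j * u i j"
  "\<forall>i\<in>VV. (\<Sum>l\<in>VV. u i l) = 1 \<and> (\<Sum>l\<in>VV. u l i) = 1"
  "\<forall>i\<in>VV. \<forall>j\<in>VV. \<forall>p\<in>VV. \<forall>q\<in>VV. ((i \<inter> p = {}) \<noteq> (j \<inter> q = {})) \<longrightarrow>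
        u i j * u p q = 0 \<and> u p q * u i j = 0"
  using mu unfolding graph_magic_unitary_def odd_graph_adj_def VV_def by blast+

lemma u_star: "i \<in> VV \<Longrightarrow> j \<in> VV \<Longrightarrow> star (u i j) = u i j"
  using mu_unf(1) by metis
lemma u_idem: "i \<in> VV \<Longrightarrow> j \<in> VV \<Longrightarrow> u i j * u i j = u i j"
  using mu_unf(1) by metis
lemma u_proj: "i \<in> VV \<Longrightarrow> j \<in> VV \<Longrightarrow> proj (u i j)"
  by (simp add: proj_def u_star u_idem)
lemma rowsum: "i \<in> VV \<Longrightarrow> (\<Sum>l\<in>VV. u i l) = 1" using mu_unf(2) by blast
lemma colsum: "i \<in> VV \<Longrightarrow> (\<Sum>l\<in>VV. u l i) = 1" using mu_unf(2) by blast
lemma R3: "i \<in> VV \<Longrightarrow> j \<in> VV \<Longrightarrow> p \<in> VV \<Longrightarrow> q \<in> VV \<Longrightarrow> (i \<inter> p = {}) \<noteq> (j \<inter> q = {})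
   \<Longrightarrow> u i j * u p q = 0"
  using mu_unf(3) by blast
lemma R3': "i \<in> VV \<Longrightarrow> j \<in> VV \<Longrightarrow> p \<in> VV \<Longrightarrow> q \<in> VV \<Longrightarrow> (i \<inter> p = {}) \<noteq> (j \<inter> q = {})
   \<Longrightarrow> u p q * u i j = 0"
  using mu_unf(3) by blast

lemma O1: assumes "i \<in> VV" "j \<in> VV" "j' \<in> VV" "j \<noteq> j'" shows "u i j * u i j' = 0"
proof -
  obtain D where D: "D \<in> VV" "j \<inter> D = {}" "j' \<inter> D \<noteq> {}" using distinguish[OF assms(2,3,4)] by blast
  have "u i j * u i j' = u i j * (\<Sum>t\<in>VV. u t D) * u i j'" using colsum[OF D(1)] by simp
  also have "\<dots> = (\<Sum>t\<in>VV. u i j * (u t D * u i j'))" by (simp add: sum_distrib_left sum_distrib_right mult.assoc)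
  also have "\<dots> = 0"
  proof (rule sum.neutral, intro ballI)
    fix t assume t: "t \<in> VV"
    show "u i j * (u t D * u i j') = 0"
    proof (cases "i \<inter> t = {}")
      case True
      have "u t D * u i j' = 0" using R3[OF t D(1) assms(1) assms(3)] True D by (auto simp: Int_commute)
      thus ?thesis by simp
    next
      case False
      have "u i j * u t D = 0" using R3[OF assms(1,2) t D(1)] False D by auto
      thus ?thesis by (simp add: mult.assoc[symmetric])
    qed
  qed
  finally show ?thesis .
qed

lemma O2: assumes "i \<in> VV" "i' \<in> VV" "j \<in> VV" "i \<noteq> i'" shows "u i j * u i' j = 0"
proof -
  obtain F where F: "F \<in> VV" "i \<inter> F = {}" "i' \<inter> F \<noteq> {}" using distinguish[OF assms(1,2,4)] by blast
  have "u i j * u i' j = u i j * (\<Sum>t\<in>VV. u F t) * u i' j" using rowsum[OF F(1)] by simp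
  also have "\<dots> = (\<Sum>t\<in>VV. u i j * (u F t * u i' j))" by (simp add: sum_distrib_left sum_distrib_right mult.assoc)
  also have "\<dots> = 0"
  proof (rule sum.neutral, intro ballI)
    fix t assume t: "t \<in> VV"
    show "u i j * (u F t * u i' j) = 0"
    proof (cases "j \<inter> t = {}")
      case True
      have "u F t * u i' j = 0" using R3[OF F(1) t assms(2) assms(3)] True F by (auto simp: Int_commute)
      thus ?thesis by simp
    next
      case False
      have "u i j * u F t = 0" using R3[OF assms(1,3) F(1) t] False F by auto
      thus ?thesis by (simp add: mult.assoc[symmetric])
    qed
  qed
  finally show ?thesis .
qed

lemma rowsub:
  assumes "X \<in> VV" "S \<subseteq> VV" "S' \<subseteq> VV"
  shows "(\<Sum>B\<in>S. u X B) * (\<Sum>B\<in>S'. u X B) = (\<Sum>B\<in>S \<inter> S'. u X B)"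
proof -
  have fS: "finite S" "finite S'" using assms finite_subset finVV by blast+
  have "(\<Sum>B\<in>S. u X B) * (\<Sum>B\<in>S'. u X B) = (\<Sum>B\<in>S. \<Sum>B'\<in>S'. u X B * u X B')"
    by (rule sum_product)
  also have "\<dots> = (\<Sum>B\<in>S. if B \<in> S' then u X B else 0)"
  proof (rule sum.cong[OF refl])
    fix B assume B: "B \<in> S"
    show "(\<Sum>B'\<in>S'. u X B * u X B') = (if B \<in> S' then u X B else 0)"
    proof (cases "B \<in> S'")
      case True
      have "(\<Sum>B'\<in>S'. u X B * u X B') = u X B * u X B + (\<Sum>B'\<in>S'-{B}. u X B * u X B')"
        using fS True by (simp add: sum.remove)
      also have "(\<Sum>B'\<in>S'-{B}. u X B * u X B') = 0"
      proof (rule sum.neutral, intro ballI)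
        fix B' assume "B' \<in> S' - {B}"
        thus "u X B * u X B' = 0" using O1[of X B B'] assms B by blast
      qed
      finally show ?thesis using True u_idem assms B by auto
    next
      case False
      have "(\<Sum>B'\<in>S'. u X B * u X B') = 0"
      proof (rule sum.neutral, intro ballI)
        fix B' assume "B' \<in> S'"
        thus "u X B * u X B' = 0" using O1[of X B B'] assms B False by blast
      qed
      thus ?thesis using False by simp
    qed
  qed
  also have "\<dots> = (\<Sum>B\<in>S \<inter> S'. u X B)"
    using fS by (simp add: sum.If_cases Int_commute)
  finally show ?thesis .
qed


definition Q :: "nat set \<Rightarrow> nat \<Rightarrow> 'a" where "Q X y = (\<Sum>B\<in>{B\<in>VV. y \<in> B}. u X B)"
definition W :: "nat set \<Rightarrow> nat set \<Rightarrow> nat \<Rightarrow> 'a" where "W X Y y = (1 - Q X y) * (1 - Q Y y)"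
definition SV :: "nat \<Rightarrow> nat set set" where "SV y = {B\<in>VV. y \<notin> B}"

lemma SV_sub: "SV y \<subseteq> VV" by (auto simp: SV_def)
lemma finSV[simp]: "finite (SV y)" using SV_sub finVV finite_subset by blast

lemma Qc: assumes "X \<in> VV" shows "1 - Q X y = (\<Sum>B\<in>SV y. u X B)"
proof -
  have "VV = {B\<in>VV. y \<in> B} \<union> SV y" by (auto simp: SV_def)
  hence "(\<Sum>B\<in>VV. u X B) = (\<Sum>B\<in>{B\<in>VV. y \<in> B}. u X B) + (\<Sum>B\<in>SV y. u X B)"
    by (metis (no_types, lifting) sum.union_disjoint finVV finite_Un disjoint_iff mem_Collect_eq SV_def)
  thus ?thesis using rowsum[OF assms] by (simp add: Q_def algebra_simps)
qed

lemma Q_star: "X \<in> VV \<Longrightarrow> star (Q X y) = Q X y"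
  by (simp add: Q_def star_sum u_star)

lemma Q_idem: "X \<in> VV \<Longrightarrow> Q X y * Q X y = Q X y"
  unfolding Q_def by (subst rowsub) auto

lemma QQ: assumes "X \<in> VV" "Y \<in> VV" "X \<inter> Y = {}" shows "Q X y * Q Y y = 0"
proof -
  have "Q X y * Q Y y = (\<Sum>B\<in>{B\<in>VV. y \<in> B}. \<Sum>D\<in>{B\<in>VV. y \<in> B}. u X B * u Y D)"
    unfolding Q_def by (rule sum_product)
  also have "\<dots> = 0"
  proof (intro sum.neutral ballI)
    fix B D assume B: "B \<in> {B\<in>VV. y \<in> B}" and D: "D \<in> {B\<in>VV. y \<in> B}"
    have "B \<inter> D \<noteq> {}" using B D by auto
    thus "u X B * u Y D = 0" using R3[of X B Y D] B D assms by auto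
  qed
  finally show ?thesis .
qed

lemma QQ': assumes "X \<in> VV" "Y \<in> VV" "X \<inter> Y = {}" shows "Q Y y * Q X y = 0"
  using QQ[of Y X] assms by (simp add: Int_commute)

lemma W_alt: assumes "X \<in> VV" "Y \<in> VV" "X \<inter> Y = {}" shows "W X Y y = 1 - Q X y - Q Y y"
  unfolding W_def using QQ[OF assms, of y] by (simp add: algebra_simps)

lemma W_sym: assumes "X \<in> VV" "Y \<in> VV" "X \<inter> Y = {}" shows "W X Y y = W Y X y"
proof -
  have "W Y X y = 1 - Q Y y - Q X y" using W_alt[of Y X] assms by (simp add: Int_commute)
  thus ?thesis using W_alt[OF assms, of y] by (metis diff_diff_eq add.commute)
qed

lemma W_star: assumes "X \<in> VV" "Y \<in> VV" "X \<inter> Y = {}" shows "star (W X Y y) = W X Y y"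
  using W_alt[OF assms] Q_star assms by simp

lemma W_idem: assumes "X \<in> VV" "Y \<in> VV" "X \<inter> Y = {}" shows "W X Y y * W X Y y = W X Y y"
proof -
  have a: "Q X y * Q X y = Q X y" "Q Y y * Q Y y = Q Y y" "Q X y * Q Y y = 0" "Q Y y * Q X y = 0"
    using Q_idem QQ QQ' assms by auto
  show ?thesis unfolding W_alt[OF assms]
    by (simp add: left_diff_distrib right_diff_distrib a)
qed

lemma W_proj: assumes "X \<in> VV" "Y \<in> VV" "X \<inter> Y = {}" shows "proj (W X Y y)"
  using W_star[OF assms] W_idem[OF assms] by (simp add: proj_def)

lemma W_QX: assumes "X \<in> VV" "Y \<in> VV" "X \<inter> Y = {}" shows "W X Y y * Q X y = 0"
proof -
  have a: "Q X y * Q X y = Q X y" "Q Y y * Q X y = 0" using Q_idem QQ' assms by auto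
  show ?thesis unfolding W_alt[OF assms] by (simp add: left_diff_distrib a)
qed

lemma QX_W: assumes "X \<in> VV" "Y \<in> VV" "X \<inter> Y = {}" shows "Q X y * W X Y y = 0"
proof -
  have a: "Q X y * Q X y = Q X y" "Q X y * Q Y y = 0" using Q_idem QQ assms by auto
  show ?thesis unfolding W_alt[OF assms] by (simp add: right_diff_distrib a)
qed

lemma single_nb:
  assumes "X \<in> VV" "Y \<in> VV" "X \<inter> Y = {}" "B \<in> VV" "y \<in> NN" "y \<notin> B" "D \<in> VV" "y \<notin> D" "D \<noteq> nb y B"
  shows "u X B * u Y D = 0" "u Y D * u X B = 0"
proof -
  have "B \<inter> D \<noteq> {}" using nb_unique[OF assms(4,7) _ assms(5,6,8)] assms(9) by blast
  thus "u X B * u Y D = 0" "u Y D * u X B = 0" using R3[of X B Y D] R3'[of X B Y D] assms by auto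
qed

lemma nbSV: assumes "B \<in> SV y" "y \<in> NN" shows "nb y B \<in> SV y"
  using nbV[of B y] assms by (auto simp: SV_def)

lemma W_rs: assumes "X \<in> VV" "Y \<in> VV" "X \<inter> Y = {}" "y \<in> NN"
  shows "W X Y y = (\<Sum>B\<in>SV y. u X B * u Y (nb y B))"
proof -
  have "W X Y y = (\<Sum>B\<in>SV y. \<Sum>D\<in>SV y. u X B * u Y D)"
    unfolding W_def Qc[OF assms(1)] Qc[OF assms(2)] by (rule sum_product)
  also have "\<dots> = (\<Sum>B\<in>SV y. u X B * u Y (nb y B))"
  proof (rule sum.cong[OF refl])
    fix B assume B: "B \<in> SV y"
    have nbs: "nb y B \<in> SV y" using nbSV[OF B assms(4)] .
    have "(\<Sum>D\<in>SV y. u X B * u Y D) = u X B * u Y (nb y B) + (\<Sum>D\<in>SV y - {nb y B}. u X B * u Y D)"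
      using nbs by (simp add: sum.remove)
    also have "(\<Sum>D\<in>SV y - {nb y B}. u X B * u Y D) = 0"
    proof (rule sum.neutral, intro ballI)
      fix D assume "D \<in> SV y - {nb y B}"
      thus "u X B * u Y D = 0" using single_nb(1)[OF assms(1,2,3) _ assms(4)] B by (auto simp: SV_def)
    qed
    finally show "(\<Sum>D\<in>SV y. u X B * u Y D) = u X B * u Y (nb y B)" by simp
  qed
  finally show ?thesis .
qed

lemma W_sr: assumes "X \<in> VV" "Y \<in> VV" "X \<inter> Y = {}" "y \<in> NN"
  shows "W X Y y = (\<Sum>B\<in>SV y. u Y (nb y B) * u X B)"
proof -
  have "W X Y y = W Y X y" using W_sym[OF assms(1-3)] .
  also have "\<dots> = (\<Sum>D\<in>SV y. \<Sum>B\<in>SV y. u Y D * u X B)"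
    unfolding W_def Qc[OF assms(1)] Qc[OF assms(2)] by (rule sum_product)
  also have "\<dots> = (\<Sum>B\<in>SV y. \<Sum>D\<in>SV y. u Y D * u X B)" by (rule sum.swap)
  also have "\<dots> = (\<Sum>B\<in>SV y. u Y (nb y B) * u X B)"
  proof (rule sum.cong[OF refl])
    fix B assume B: "B \<in> SV y"
    have nbs: "nb y B \<in> SV y" using nbSV[OF B assms(4)] .
    have "(\<Sum>D\<in>SV y. u Y D * u X B) = u Y (nb y B) * u X B + (\<Sum>D\<in>SV y - {nb y B}. u Y D * u X B)"
      using nbs by (simp add: sum.remove)
    also have "(\<Sum>D\<in>SV y - {nb y B}. u Y D * u X B) = 0"
    proof (rule sum.neutral, intro ballI)
      fix D assume "D \<in> SV y - {nb y B}"
      thus "u Y D * u X B = 0" using single_nb(2)[OF assms(1,2,3) _ assms(4)] B by (auto simp: SV_def)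
    qed
    finally show "(\<Sum>D\<in>SV y. u Y D * u X B) = u Y (nb y B) * u X B" by simp
  qed
  finally show ?thesis .
qed

end

context OQ begin

lemma NBs_sub: "NBs X \<subseteq> VV" by (auto simp: NBs_def)
lemma finNBs[simp]: "finite (NBs X)" using NBs_sub finVV finite_subset by blast

lemma AC: assumes "X \<in> VV" "Y \<in> VV" "X \<inter> Y = {}" "B \<in> VV" "D \<in> VV"
  shows "u X B * u Y D = u Y D * u X B"
proof (cases "B \<inter> D = {}")
  case False
  thus ?thesis using R3[of X B Y D] R3'[of X B Y D] assms by auto
next
  case True
  obtain y where y: "y \<in> NN" "y \<notin> B" "D = nb y B" using adj_nb[OF assms(4,5) True] by blast
  have B: "B \<in> SV y" using assms y by (simp add: SV_def)
  have "u X B * u Y (nb y B) = u Y (nb y B) * u X B"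
  proof (rule AL[where S="SV y" and r="u X" and s="\<lambda>B. u Y (nb y B)" and Wv="W X Y y"])
    show "finite (SV y)" by simp
    show "\<And>b. b \<in> SV y \<Longrightarrow> proj (u X b)" using u_proj assms(1) SV_sub by blast
    show "\<And>b. b \<in> SV y \<Longrightarrow> proj (u Y (nb y b))"
    proof -
      fix b assume "b \<in> SV y"
      hence "nb y b \<in> SV y" using nbSV y(1) by blast
      thus "proj (u Y (nb y b))" using u_proj assms(2) SV_sub by blast
    qed
    show "\<And>b b'. b \<in> SV y \<Longrightarrow> b' \<in> SV y \<Longrightarrow> b \<noteq> b' \<Longrightarrow> u X b * u X b' = 0"
      using O1 assms(1) SV_sub by blast
    show "\<And>b b'. b \<in> SV y \<Longrightarrow> b' \<in> SV y \<Longrightarrow> b \<noteq> b' \<Longrightarrow> u Y (nb y b) * u Y (nb y b') = 0"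
    proof -
      fix b b' assume b: "b \<in> SV y" "b' \<in> SV y" "b \<noteq> b'"
      have "nb y b \<noteq> nb y b'" using nb_inj_B[of b b' y] b y(1) by (auto simp: SV_def)
      moreover have "nb y b \<in> VV" "nb y b' \<in> VV" using nbSV[OF b(1) y(1)] nbSV[OF b(2) y(1)] SV_sub by auto
      ultimately show "u Y (nb y b) * u Y (nb y b') = 0" using O1 assms(2) by blast
    qed
    show "(\<Sum>b\<in>SV y. u X b * u Y (nb y b)) = W X Y y" using W_rs[OF assms(1-3) y(1)] by simp
    show "(\<Sum>b\<in>SV y. u Y (nb y b) * u X b) = W X Y y" using W_sr[OF assms(1-3) y(1)] by simp
    show "W X Y y * W X Y y = W X Y y" using W_idem[OF assms(1-3)] .
    show "B \<in> SV y" using B .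
  qed
  thus ?thesis using y by simp
qed

lemma VS: assumes "X \<in> VV" "Y \<in> VV" "Y' \<in> VV" "X \<inter> Y = {}" "X \<inter> Y' = {}" "Y \<noteq> Y'" "y \<in> NN"
  shows "W X Y y * W X Y' y = 0"
proof -
  have "W X Y y * W X Y' y = (\<Sum>B\<in>SV y. u Y (nb y B) * u X B) * (\<Sum>B\<in>SV y. u X B * u Y' (nb y B))"
    using W_sr[OF assms(1,2,4,7)] W_rs[OF assms(1,3,5,7)] by simp
  also have "\<dots> = (\<Sum>B\<in>SV y. \<Sum>B'\<in>SV y. u Y (nb y B) * u X B * (u X B' * u Y' (nb y B')))"
    by (rule sum_product)
  also have "\<dots> = 0"
  proof (rule sum.neutral, intro ballI)
    fix B assume B: "B \<in> SV y"
    have BV: "B \<in> VV" and nbV': "nb y B \<in> VV" using B SV_sub nbSV[OF B assms(7)] by auto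
    have "(\<Sum>B'\<in>SV y. u Y (nb y B) * u X B * (u X B' * u Y' (nb y B'))) =
          u Y (nb y B) * u X B * (u X B * u Y' (nb y B)) + (\<Sum>B'\<in>SV y - {B}. u Y (nb y B) * u X B * (u X B' * u Y' (nb y B')))"
      using B by (simp add: sum.remove)
    also have "(\<Sum>B'\<in>SV y - {B}. u Y (nb y B) * u X B * (u X B' * u Y' (nb y B'))) = 0"
    proof (rule sum.neutral, intro ballI)
      fix B' assume B': "B' \<in> SV y - {B}"
      hence "u X B * u X B' = 0" using O1[OF assms(1) BV] SV_sub by auto
      hence "u Y (nb y B) * (u X B * u X B') * u Y' (nb y B') = 0" by simp
      thus "u Y (nb y B) * u X B * (u X B' * u Y' (nb y B')) = 0" by (simp add: mult.assoc)
    qed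
    also have "u Y (nb y B) * u X B * (u X B * u Y' (nb y B)) = u Y (nb y B) * (u X B * u X B) * u Y' (nb y B)"
      by (simp add: mult.assoc)
    also have "\<dots> = u Y (nb y B) * u X B * u Y' (nb y B)" using u_idem[OF assms(1) BV] by simp
    also have "\<dots> = u X B * (u Y (nb y B) * u Y' (nb y B))"
      using AC[OF assms(1,2,4) BV nbV'] by (metis mult.assoc)
    also have "u Y (nb y B) * u Y' (nb y B) = 0" using O2[OF assms(2,3) nbV' assms(6)] .
    finally show "(\<Sum>B'\<in>SV y. u Y (nb y B) * u X B * (u X B' * u Y' (nb y B'))) = 0" by simp
  qed
  finally show ?thesis .
qed

lemma ADJSUM: assumes "X \<in> VV" "B \<in> VV" "D \<in> VV"
  shows "u X B * (\<Sum>Y\<in>NBs X. u Y D) = (if B \<inter> D = {} then u X B else 0)"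
proof -
  have split: "VV = NBs X \<union> (VV - NBs X)" using NBs_sub by blast
  have "u X B = u X B * (\<Sum>Y\<in>VV. u Y D)" using colsum[OF assms(3)] by simp
  also have "\<dots> = u X B * ((\<Sum>Y\<in>NBs X. u Y D) + (\<Sum>Y\<in>VV - NBs X. u Y D))"
    by (subst split, subst sum.union_disjoint) auto
  finally have e: "u X B = u X B * (\<Sum>Y\<in>NBs X. u Y D) + u X B * (\<Sum>Y\<in>VV - NBs X. u Y D)"
    by (simp add: distrib_left)
  show ?thesis
  proof (cases "B \<inter> D = {}")
    case True
    have "u X B * (\<Sum>Y\<in>VV - NBs X. u Y D) = (\<Sum>Y\<in>VV - NBs X. u X B * u Y D)" by (simp add: sum_distrib_left)
    also have "\<dots> = 0"
    proof (rule sum.neutral, intro ballI)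
      fix Y assume Y: "Y \<in> VV - NBs X"
      hence "X \<inter> Y \<noteq> {}" by (auto simp: NBs_def)
      thus "u X B * u Y D = 0" using R3[of X B Y D] assms Y True by auto
    qed
    finally show ?thesis using e True by simp
  next
    case False
    have "u X B * (\<Sum>Y\<in>NBs X. u Y D) = (\<Sum>Y\<in>NBs X. u X B * u Y D)" by (simp add: sum_distrib_left)
    also have "\<dots> = 0"
    proof (rule sum.neutral, intro ballI)
      fix Y assume Y: "Y \<in> NBs X"
      hence "X \<inter> Y = {}" "Y \<in> VV" by (auto simp: NBs_def)
      thus "u X B * u Y D = 0" using R3[of X B Y D] assms False by auto
    qed
    finally show ?thesis using False by simp
  qed
qed


lemma PI_step: assumes "X \<in> VV" "y \<in> NN" "B \<in> SV y"
  shows "u X B * (\<Sum>Y\<in>NBs X. Q Y y) = of_nat (k - 1) * u X B"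
proof -
  have BV: "B \<in> VV" "y \<notin> B" using assms(3) by (auto simp: SV_def)
  let ?T = "{D\<in>VV. y \<in> D}"
  have "(\<Sum>Y\<in>NBs X. Q Y y) = (\<Sum>Y\<in>NBs X. \<Sum>D\<in>?T. u Y D)" by (simp add: Q_def)
  also have "\<dots> = (\<Sum>D\<in>?T. \<Sum>Y\<in>NBs X. u Y D)" by (rule sum.swap)
  finally have e: "u X B * (\<Sum>Y\<in>NBs X. Q Y y) = (\<Sum>D\<in>?T. u X B * (\<Sum>Y\<in>NBs X. u Y D))"
    by (simp add: sum_distrib_left)
  also have "\<dots> = (\<Sum>D\<in>?T. if B \<inter> D = {} then u X B else 0)"
    by (rule sum.cong[OF refl]) (use ADJSUM assms BV in auto)
  also have "\<dots> = (\<Sum>D\<in>{D\<in>?T. B \<inter> D = {}}. u X B)"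
    by (rule sum.inter_filter[symmetric]) simp
  also have "{D\<in>?T. B \<inter> D = {}} = {D\<in>VV. B \<inter> D = {} \<and> y \<in> D}" by auto
  also have "(\<Sum>D\<in>{D\<in>VV. B \<inter> D = {} \<and> y \<in> D}. u X B) = of_nat (k - 1) * u X B"
    using card_NBs_y[OF BV(1) assms(2) BV(2)] by simp
  finally show ?thesis .
qed

lemma PI: assumes "X \<in> VV" "y \<in> NN"
  shows "Q X y + (\<Sum>Y\<in>NBs X. W X Y y) = 1"
proof -
  have c1: "(1 - Q X y) * (\<Sum>Y\<in>NBs X. Q Y y) = of_nat (k - 1) * (1 - Q X y)"
  proof -
    have "(1 - Q X y) * (\<Sum>Y\<in>NBs X. Q Y y) = (\<Sum>B\<in>SV y. u X B * (\<Sum>Y\<in>NBs X. Q Y y))"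
      by (simp add: Qc[OF assms(1)] sum_distrib_right)
    also have "\<dots> = (\<Sum>B\<in>SV y. of_nat (k - 1) * u X B)"
      by (rule sum.cong[OF refl]) (rule PI_step[OF assms])
    also have "\<dots> = of_nat (k - 1) * (1 - Q X y)"
      by (simp add: Qc[OF assms(1)] sum_distrib_left)
    finally show ?thesis .
  qed
  have "(\<Sum>Y\<in>NBs X. W X Y y) = (\<Sum>Y\<in>NBs X. (1 - Q X y) * (1 - Q Y y))" by (simp add: W_def)
  also have "\<dots> = (1 - Q X y) * (\<Sum>Y\<in>NBs X. (1 - Q Y y))" by (simp add: sum_distrib_left)
  also have "(\<Sum>Y\<in>NBs X. (1 - Q Y y)) = of_nat k - (\<Sum>Y\<in>NBs X. Q Y y)"
    by (simp add: sum_subtractf card_NBs[OF assms(1)])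
  also have "(1 - Q X y) * (of_nat k - (\<Sum>Y\<in>NBs X. Q Y y)) = (1 - Q X y) * of_nat k - of_nat (k - 1) * (1 - Q X y)"
    by (simp add: right_diff_distrib c1)
  also have "(1 - Q X y) * of_nat k = of_nat k * (1 - Q X y)" by (simp add: mult_of_nat_commute)
  also have "of_nat k * (1 - Q X y) - of_nat (k - 1) * (1 - Q X y) = (of_nat k - of_nat (k - 1)) * (1 - Q X y)"
    by (simp add: left_diff_distrib)
  also have "(of_nat k - of_nat (k - 1) :: 'a) = 1" using k2 by (simp add: of_nat_diff)
  finally show ?thesis by simp
qed

lemma I3: assumes "X \<in> VV" "Y \<in> NBs X" "y \<in> NN"
  shows "Q Y y = (\<Sum>Y'\<in>NBs X - {Y}. W X Y' y)"
proof -
  have YV: "Y \<in> VV" "X \<inter> Y = {}" using assms(2) by (auto simp: NBs_def)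
  have "Q X y + (W X Y y + (\<Sum>Y'\<in>NBs X - {Y}. W X Y' y)) = 1"
    using PI[OF assms(1,3)] assms(2) by (simp add: sum.remove)
  hence "Q X y + ((1 - Q X y - Q Y y) + (\<Sum>Y'\<in>NBs X - {Y}. W X Y' y)) = 1"
    using W_alt[OF assms(1) YV(1,2)] by simp
  thus ?thesis by (simp add: algebra_simps)
qed

end

context OQ begin

lemma swapV: assumes "X \<in> VV" "a \<in> X" "c \<in> NN" "c \<notin> X"
  shows "insert c (X - {a}) \<in> VV"
proof -
  have fX: "finite X" using VV_fin[OF assms(1)] .
  have "card (X - {a}) = k - 1 - 1" using VV_card[OF assms(1)] assms(2) fX by (simp add: card_Diff_singleton)
  moreover have "card X \<ge> 1" using assms(2) fX card_gt_0_iff by (metis One_nat_def Suc_leI empty_iff)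
  ultimately have "card (insert c (X - {a})) = k - 1" using assms fX VV_card[OF assms(1)] by simp
  moreover have "insert c (X - {a}) \<subseteq> NN" using assms VV_sub by blast
  ultimately show ?thesis by (simp add: VV_iff)
qed

lemma NBs_mem: "X \<in> VV \<Longrightarrow> Y \<in> VV \<Longrightarrow> X \<inter> Y = {} \<Longrightarrow> Y \<in> NBs X"
  by (simp add: NBs_def)

lemma QW_absorb: assumes "P \<in> VV" "X \<in> NBs P" "Y' \<in> NBs P" "Y' \<noteq> X" "y \<in> NN"
  shows "Q X y * W P Y' y = W P Y' y"
proof -
  have Y'V: "Y' \<in> VV" "P \<inter> Y' = {}" using assms(3) by (auto simp: NBs_def)
  have "Q X y * W P Y' y = (\<Sum>Y''\<in>NBs P - {X}. W P Y'' y * W P Y' y)"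
    by (simp add: I3[OF assms(1,2,5)] sum_distrib_right)
  also have "\<dots> = W P Y' y * W P Y' y + (\<Sum>Y''\<in>NBs P - {X} - {Y'}. W P Y'' y * W P Y' y)"
    using assms(3,4) by (simp add: sum.remove)
  also have "(\<Sum>Y''\<in>NBs P - {X} - {Y'}. W P Y'' y * W P Y' y) = 0"
  proof (rule sum.neutral, intro ballI)
    fix Y'' assume Y'': "Y'' \<in> NBs P - {X} - {Y'}"
    hence "Y'' \<in> VV" "P \<inter> Y'' = {}" "Y'' \<noteq> Y'" by (auto simp: NBs_def)
    thus "W P Y'' y * W P Y' y = 0" using VS[OF assms(1) _ Y'V(1) _ Y'V(2) _ assms(5)] by blast
  qed
  finally show ?thesis using W_idem[OF assms(1) Y'V] by simp
qed

lemma WQ: assumes X: "X \<in> VV" and z: "z \<in> NN" "z \<notin> X" and a: "a \<in> X" and c: "c \<in> NN" "c \<notin> X" "c \<noteq> z"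
  and y: "y \<in> NN"
  shows "W X (nb z X) y * Q (insert c (X - {a})) y = 0"
proof -
  define X' where "X' = insert c (X - {a})"
  define P where "P = nb c X"
  define C where "C = nb z X"
  have X'V: "X' \<in> VV" using swapV[OF X a c(1,2)] by (simp add: X'_def)
  have PV: "P \<in> VV" using nbV[OF X c(1,2)] by (simp add: P_def)
  have CV: "C \<in> VV" using nbV[OF X z] by (simp add: C_def)
  have XC: "X \<inter> C = {}" by (simp add: C_def)
  have XP: "X \<in> NBs P" using X PV by (intro NBs_mem) (auto simp: P_def)
  have X'P: "X' \<in> NBs P" using X'V PV by (intro NBs_mem) (auto simp: P_def X'_def nb_def)
  have CP: "C \<noteq> P" using nb_inj_y[of z X c] z c by (auto simp: C_def P_def)
  have "W X C y * Q X' y = (\<Sum>Y'\<in>NBs P - {X'}. W X C y * W P Y' y)"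
    by (simp add: I3[OF PV X'P y] sum_distrib_left)
  also have "\<dots> = 0"
  proof (rule sum.neutral, intro ballI)
    fix Y' assume Y': "Y' \<in> NBs P - {X'}"
    hence Y'V: "Y' \<in> VV" "P \<inter> Y' = {}" by (auto simp: NBs_def)
    show "W X C y * W P Y' y = 0"
    proof (cases "Y' = X")
      case True
      have "W P X y = W X P y" using W_sym[OF PV X] XP by (auto simp: NBs_def Int_commute)
      moreover have "W X C y * W X P y = 0" using VS[OF X CV PV XC _ CP y] by (simp add: P_def)
      ultimately show ?thesis using True by simp
    next
      case False
      have "W X C y * W P Y' y = W X C y * (Q X y * W P Y' y)"
        using QW_absorb[OF PV XP _ False y] Y' by simp
      also have "\<dots> = (W X C y * Q X y) * W P Y' y" by (simp add: mult.assoc)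
      also have "W X C y * Q X y = 0" using W_QX[OF X CV XC] .
      finally show ?thesis by simp
    qed
  qed
  finally show ?thesis by (simp add: C_def X'_def)
qed


lemma swap_nb: assumes X: "X \<in> VV" and z: "z \<in> NN" "z \<notin> X" and a: "a \<in> X" and c: "c \<in> NN" "c \<notin> X" "c \<noteq> z"
  shows "insert a (nb z X - {c}) = nb z (insert c (X - {a}))"
  using assms VV_sub[OF X] by (auto simp: nb_def)

lemma SW1: assumes X: "X \<in> VV" and z: "z \<in> NN" "z \<notin> X" and a: "a \<in> X" and c: "c \<in> NN" "c \<notin> X" "c \<noteq> z"
  and y: "y \<in> NN"
  shows "W X (nb z X) y * W (insert c (X - {a})) (nb z (insert c (X - {a}))) y = W X (nb z X) y"
proof -
  define X' where "X' = insert c (X - {a})"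
  define C where "C = nb z X"
  define C' where "C' = nb z X'"
  have X'V: "X' \<in> VV" using swapV[OF X a c(1,2)] by (simp add: X'_def)
  have zX': "z \<notin> X'" using z c by (auto simp: X'_def)
  have C'V: "C' \<in> VV" using nbV[OF X'V z(1) zX'] by (simp add: C'_def)
  have CV: "C \<in> VV" using nbV[OF X z] by (simp add: C_def)
  have XC: "X \<inter> C = {}" by (simp add: C_def)
  have X'C': "X' \<inter> C' = {}" by (simp add: C'_def)
  have q1: "W X C y * Q X' y = 0" using WQ[OF X z a c y] by (simp add: C_def X'_def)
  have cC: "c \<in> C" using c by (simp add: C_def nb_def)
  have zC: "z \<notin> C" by (simp add: C_def)
  have aN: "a \<in> NN" "a \<notin> C" "a \<noteq> z" using a z VV_sub[OF X] by (auto simp: C_def nb_def)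
  have "W C (nb z C) y * Q (insert a (C - {c})) y = 0" using WQ[OF CV z(1) zC cC aN y] .
  moreover have "nb z C = X" using nb_nb[OF X z] by (simp add: C_def)
  moreover have "insert a (C - {c}) = C'" using swap_nb[OF X z a c] by (simp add: C_def C'_def X'_def)
  moreover have "W C X y = W X C y" using W_sym[OF X CV XC] by simp
  ultimately have q2: "W X C y * Q C' y = 0" by simp
  have "W X C y * W X' C' y = W X C y * (1 - Q X' y - Q C' y)" using W_alt[OF X'V C'V X'C'] by simp
  also have "\<dots> = W X C y" by (simp add: right_diff_distrib q1 q2)
  finally show ?thesis by (simp add: C_def X'_def C'_def)
qed

lemma SW: assumes X: "X \<in> VV" and z: "z \<in> NN" "z \<notin> X" and a: "a \<in> X" and c: "c \<in> NN" "c \<notin> X" "c \<noteq> z"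
  and y: "y \<in> NN"
  shows "W X (nb z X) y = W (insert c (X - {a})) (nb z (insert c (X - {a}))) y"
proof -
  define X' where "X' = insert c (X - {a})"
  have X'V: "X' \<in> VV" using swapV[OF X a c(1,2)] by (simp add: X'_def)
  have zX': "z \<notin> X'" using z c by (auto simp: X'_def)
  have cX': "c \<in> X'" by (simp add: X'_def)
  have aX': "a \<in> NN" "a \<notin> X'" "a \<noteq> z" using a z c VV_sub[OF X] by (auto simp: X'_def)
  have bk: "insert a (X' - {c}) = X" using a c by (auto simp: X'_def)
  have e1: "W X (nb z X) y * W X' (nb z X') y = W X (nb z X) y"
    using SW1[OF X z a c y] by (simp add: X'_def)
  have e2: "W X' (nb z X') y * W X (nb z X) y = W X' (nb z X') y"
    using SW1[OF X'V z(1) zX' cX' aX' y] bk by simp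
  have sX: "star (W X (nb z X) y) = W X (nb z X) y" using W_star[OF X nbV[OF X z]] by simp
  have sX': "star (W X' (nb z X') y) = W X' (nb z X') y" using W_star[OF X'V nbV[OF X'V z(1) zX']] by simp
  have "W X (nb z X) y = star (W X (nb z X) y * W X' (nb z X') y)" using e1 sX by simp
  also have "\<dots> = W X' (nb z X') y * W X (nb z X) y" by (simp add: star_mult sX sX')
  also have "\<dots> = W X' (nb z X') y" using e2 .
  finally show ?thesis by (simp add: X'_def)
qed

lemma K_aux: assumes z: "z \<in> NN" and X0: "X0 \<in> VV" "z \<notin> X0" and y: "y \<in> NN"
  shows "\<forall>X. X \<in> VV \<longrightarrow> z \<notin> X \<longrightarrow> card (X - X0) = n \<longrightarrow> W X (nb z X) y = W X0 (nb z X0) y"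
proof (induction n)
  case 0
  show ?case
  proof (intro allI impI)
    fix X assume X: "X \<in> VV" "z \<notin> X" "card (X - X0) = 0"
    have "X - X0 = {}" using X VV_fin by simp
    hence "X \<subseteq> X0" by blast
    hence "X = X0" using card_subset_eq[OF VV_fin[OF X0(1)]] VV_card X X0 by metis
    thus "W X (nb z X) y = W X0 (nb z X0) y" by simp
  qed
next
  case (Suc n)
  show ?case
  proof (intro allI impI)
    fix X assume X: "X \<in> VV" "z \<notin> X" "card (X - X0) = Suc n"
    have fX: "finite X" "finite X0" using X VV_fin X0 by auto
    have "X - X0 \<noteq> {}" using X(3) by (metis card.empty Zero_not_Suc)
    then obtain a where a: "a \<in> X" "a \<notin> X0" by auto
    have "X0 - X \<noteq> {}"
    proof
      assume "X0 - X = {}"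
      hence "X0 \<subseteq> X" by blast
      hence "X0 = X" using card_subset_eq[OF fX(1)] VV_card X(1) X0(1) by metis
      thus False using a by simp
    qed
    then obtain c where c: "c \<in> X0" "c \<notin> X" by auto
    have cN: "c \<in> NN" "c \<noteq> z" using c VV_sub[OF X0(1)] X0(2) by auto
    define X' where "X' = insert c (X - {a})"
    have X'V: "X' \<in> VV" using swapV[OF X(1) a(1) cN(1) c(2)] by (simp add: X'_def)
    have zX': "z \<notin> X'" using X(2) cN by (auto simp: X'_def)
    have "X' - X0 = (X - X0) - {a}" using c a by (auto simp: X'_def)
    hence "card (X' - X0) = n" using X(3) a fX by (simp add: card_Diff_singleton)
    hence "W X' (nb z X') y = W X0 (nb z X0) y" using Suc.IH X'V zX' by blast
    moreover have "W X (nb z X) y = W X' (nb z X') y"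
      using SW[OF X(1) z X(2) a(1) cN(1) c(2) cN(2) y] by (simp add: X'_def)
    ultimately show "W X (nb z X) y = W X0 (nb z X0) y" by simp
  qed
qed

lemma K: assumes "z \<in> NN" "X \<in> VV" "z \<notin> X" "X0 \<in> VV" "z \<notin> X0" "y \<in> NN"
  shows "W X (nb z X) y = W X0 (nb z X0) y"
  using K_aux[OF assms(1,4,5,6)] assms(2,3) by blast

end

context OQ begin

lemma exV_avoid: assumes "F \<subseteq> NN" "card F \<le> k" shows "\<exists>A. A \<in> VV \<and> A \<inter> F = {}"
proof -
  have fF: "finite F" using assms(1) finNN finite_subset by blast
  have "card (NN - F) = card NN - card F" using assms(1) fF by (simp add: card_Diff_subset)
  hence "k - 1 \<le> card (NN - F)" using cardNN assms(2) k2 by simp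
  then obtain A where A: "A \<subseteq> NN - F" "card A = k - 1" by (rule obtain_subset_with_card_n)
  hence "A \<in> VV" by (auto simp: VV_iff)
  thus ?thesis using A by blast
qed

definition A0 :: "nat \<Rightarrow> nat set" where "A0 z = (SOME A. A \<in> VV \<and> z \<notin> A)"
definition v :: "nat \<Rightarrow> nat \<Rightarrow> 'a" where "v z y = W (A0 z) (nb z (A0 z)) y"

lemma A0: assumes "z \<in> NN" shows "A0 z \<in> VV" "z \<notin> A0 z"
proof -
  have "\<exists>A. A \<in> VV \<and> A \<inter> {z} = {}" using exV_avoid[of "{z}"] assms k2 by simp
  hence "\<exists>A. A \<in> VV \<and> z \<notin> A" by blast
  hence "A0 z \<in> VV \<and> z \<notin> A0 z" unfolding A0_def by (rule someI_ex)
  thus "A0 z \<in> VV" "z \<notin> A0 z" by auto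
qed

lemma vK: assumes "z \<in> NN" "X \<in> VV" "z \<notin> X" "y \<in> NN" shows "W X (nb z X) y = v z y"
  unfolding v_def using K[OF assms(1-3) A0[OF assms(1)] assms(4)] .

lemma v_star: "z \<in> NN \<Longrightarrow> star (v z y) = v z y"
  unfolding v_def using W_star A0 nbV by simp

lemma v_idem: "z \<in> NN \<Longrightarrow> v z y * v z y = v z y"
  unfolding v_def using W_idem A0 nbV by simp

lemma sum_NBs: assumes "C \<in> VV" shows "(\<Sum>Y\<in>NBs C. f Y) = (\<Sum>x\<in>NN - C. f (nb x C))"
  unfolding NBs_img[OF assms] by (rule sum.reindex[OF nb_inj_on, unfolded comp_def])

lemma Qc_v: assumes "A \<in> VV" "y \<in> NN" shows "1 - Q A y = (\<Sum>x\<in>NN - A. v x y)"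
proof -
  have "1 - Q A y = (\<Sum>Y\<in>NBs A. W A Y y)" using PI[OF assms] by (simp add: algebra_simps)
  also have "\<dots> = (\<Sum>x\<in>NN - A. W A (nb x A) y)" by (rule sum_NBs[OF assms(1)])
  also have "\<dots> = (\<Sum>x\<in>NN - A. v x y)" by (rule sum.cong[OF refl]) (use vK assms in auto)
  finally show ?thesis .
qed

lemma Q_v: assumes "A \<in> VV" "y \<in> NN" shows "Q A y = (\<Sum>x\<in>A. v x y)"
proof -
  have "card (NN - A) = k" using cardNNB[OF assms(1)] .
  hence "card (NN - A) \<noteq> 0" using k2 by simp
  hence "NN - A \<noteq> {}" by (metis card.empty)
  then obtain z where z: "z \<in> NN" "z \<notin> A" by auto
  define C where "C = nb z A"
  have CV: "C \<in> VV" using nbV[OF assms(1) z] by (simp add: C_def)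
  have AC: "A \<in> NBs C" using assms(1) CV by (intro NBs_mem) (auto simp: C_def nb_def)
  have zC: "z \<in> NN - C" using z by (simp add: C_def nb_def)
  have nbzC: "nb z C = A" using nb_nb[OF assms(1) z] by (simp add: C_def)
  have e1: "(\<Sum>Y\<in>NBs C. W C Y y) = W C A y + (\<Sum>Y\<in>NBs C - {A}. W C Y y)"
    using AC by (simp add: sum.remove)
  have e2: "(\<Sum>Y\<in>NBs C. W C Y y) = W C A y + (\<Sum>x\<in>NN - C - {z}. W C (nb x C) y)"
    using sum_NBs[OF CV, of "\<lambda>Y. W C Y y"] zC nbzC by (simp add: sum.remove)
  have "Q A y = (\<Sum>Y\<in>NBs C - {A}. W C Y y)" using I3[OF CV AC assms(2)] .
  also have "\<dots> = (\<Sum>x\<in>NN - C - {z}. W C (nb x C) y)" using e1 e2 by simp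
  also have "NN - C - {z} = A" using VV_sub[OF assms(1)] z by (auto simp: C_def nb_def)
  also have "(\<Sum>x\<in>A. W C (nb x C) y) = (\<Sum>x\<in>A. v x y)"
  proof (rule sum.cong[OF refl])
    fix x assume x: "x \<in> A"
    have "x \<in> NN" "x \<notin> C" using x VV_sub[OF assms(1)] by (auto simp: C_def nb_def)
    thus "W C (nb x C) y = v x y" using vK CV assms(2) by blast
  qed
  finally show ?thesis .
qed

lemma existsV: "\<exists>A. A \<in> VV" using exV_avoid[of "{}"] by auto

lemma v_colsum: assumes "y \<in> NN" shows "(\<Sum>x\<in>NN. v x y) = 1"
proof -
  obtain A where A: "A \<in> VV" using existsV by blast
  have "NN = A \<union> (NN - A)" using VV_sub[OF A] by blast
  hence "(\<Sum>x\<in>NN. v x y) = (\<Sum>x\<in>A. v x y) + (\<Sum>x\<in>NN - A. v x y)"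
    by (metis Diff_disjoint finNN finite_Diff finite_subset VV_sub[OF A] sum.union_disjoint)
  also have "\<dots> = Q A y + (1 - Q A y)" using Q_v[OF A assms] Qc_v[OF A assms] by simp
  finally show ?thesis by simp
qed

lemma v_colorth: assumes "x \<in> NN" "x' \<in> NN" "x \<noteq> x'" "y \<in> NN" shows "v x y * v x' y = 0"
proof -
  have "card {x, x'} \<le> k" using assms(3) k2 by simp
  then obtain X where X: "X \<in> VV" "X \<inter> {x, x'} = {}" using exV_avoid[of "{x,x'}"] assms by auto
  have xX: "x \<notin> X" "x' \<notin> X" using X by auto
  have "nb x X \<noteq> nb x' X" using nb_inj_y[of x X x'] assms xX by auto
  hence "W X (nb x X) y * W X (nb x' X) y = 0"
    using VS[OF X(1) nbV[OF X(1) assms(1) xX(1)] nbV[OF X(1) assms(2) xX(2)]] assms(4) by simp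
  thus ?thesis using vK[OF assms(1) X(1) xX(1) assms(4)] vK[OF assms(2) X(1) xX(2) assms(4)] by simp
qed

lemma v_roworth: assumes "z \<in> NN" "y \<in> NN" "y' \<in> NN" "y \<noteq> y'" shows "v z y * v z y' = 0"
proof -
  define X where "X = A0 z"
  define C where "C = nb z X"
  have X: "X \<in> VV" "z \<notin> X" using A0[OF assms(1)] by (auto simp: X_def)
  have CV: "C \<in> VV" using nbV[OF X(1) assms(1) X(2)] by (simp add: C_def)
  have XC: "X \<inter> C = {}" by (simp add: C_def)
  have "v z y * v z y' = W X C y * W X C y'" by (simp add: v_def X_def C_def)
  also have "\<dots> = (\<Sum>B\<in>SV y. u C (nb y B) * u X B) * (\<Sum>B\<in>SV y'. u X B * u C (nb y' B))"
    using W_sr[OF X(1) CV XC assms(2)] W_rs[OF X(1) CV XC assms(3)] by simp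
  also have "\<dots> = (\<Sum>B\<in>SV y. \<Sum>B'\<in>SV y'. u C (nb y B) * u X B * (u X B' * u C (nb y' B')))"
    by (rule sum_product)
  also have "\<dots> = 0"
  proof (intro sum.neutral ballI)
    fix B B' assume B: "B \<in> SV y" and B': "B' \<in> SV y'"
    have BV: "B \<in> VV" "y \<notin> B" "B' \<in> VV" "y' \<notin> B'" using B B' by (auto simp: SV_def)
    show "u C (nb y B) * u X B * (u X B' * u C (nb y' B')) = 0"
    proof (cases "B = B'")
      case False
      hence "u X B * u X B' = 0" using O1 X(1) BV by blast
      hence "u C (nb y B) * (u X B * u X B') * u C (nb y' B') = 0" by simp
      thus ?thesis by (simp add: mult.assoc)
    next
      case True
      have n1: "nb y B \<in> VV" "nb y' B \<in> VV" using nbV BV assms True by auto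
      have "y' \<in> nb y B" using assms BV True by (auto simp: nb_def)
      hence ne: "nb y B \<noteq> nb y' B" by auto
      have "u C (nb y B) * u X B * (u X B * u C (nb y' B)) = u C (nb y B) * (u X B * u X B) * u C (nb y' B)"
        by (simp add: mult.assoc)
      also have "\<dots> = u C (nb y B) * u X B * u C (nb y' B)" using u_idem X(1) BV by simp
      also have "\<dots> = u X B * (u C (nb y B) * u C (nb y' B))"
        using AC[OF X(1) CV XC BV(1) n1(1)] by (metis mult.assoc)
      also have "u C (nb y B) * u C (nb y' B) = 0" using O1[OF CV n1 ne] .
      finally show ?thesis using True by simp
    qed
  qed
  finally show ?thesis .
qed

lemma Q_comm_same: assumes "A \<in> VV" shows "Q A y1 * Q A y2 = Q A y2 * Q A y1"
  unfolding Q_def by (simp add: rowsub[OF assms] Int_commute)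

end

context OQ begin

lemma CLem:
  fixes f :: "nat \<Rightarrow> 'a"
  assumes fT: "finite T" and hs: "\<And>S. S \<subseteq> T \<Longrightarrow> card S = j \<Longrightarrow> sum f S = 0"
    and j1: "1 \<le> j" and jT: "j < card T \<or> (j = 1 \<and> card T = 1)" and c: "c \<in> T"
  shows "f c = 0"
proof (cases "j < card T")
  case False
  hence jc: "j = 1" "card T = 1" using jT by auto
  then obtain t where "T = {t}" using card_1_singletonE by blast
  hence "T = {c}" using c by simp
  thus ?thesis using hs[of "{c}"] jc by simp
next
  case True
  have eq: "f c' = f c" if c': "c' \<in> T" for c'
  proof (cases "c' = c")
    case True thus ?thesis by simp
  next
    case False
    have "card (T - {c, c'}) = card T - 2" using fT c c' False by (simp add: card_Diff_subset)
    hence "j - 1 \<le> card (T - {c, c'})" using True by simp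
    then obtain S0 where S0: "S0 \<subseteq> T - {c, c'}" "card S0 = j - 1" "finite S0"
      by (rule obtain_subset_with_card_n)
    have cS0: "c \<notin> S0" "c' \<notin> S0" using S0 by auto
    have "sum f (insert c S0) = 0" using hs[of "insert c S0"] S0 c cS0 j1 by auto
    moreover have "sum f (insert c' S0) = 0" using hs[of "insert c' S0"] S0 c' cS0 j1 by auto
    ultimately have "f c + sum f S0 = f c' + sum f S0" using S0 cS0 by simp
    thus ?thesis by simp
  qed
  have "card (T - {c}) = card T - 1" using fT c by (simp add: card_Diff_singleton)
  hence "j - 1 \<le> card (T - {c})" using True by simp
  then obtain S1 where S1: "S1 \<subseteq> T - {c}" "card S1 = j - 1" "finite S1"
    by (rule obtain_subset_with_card_n)
  have cS1: "c \<notin> S1" using S1 by auto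
  have "sum f (insert c S1) = 0" using hs[of "insert c S1"] S1 c cS1 j1 by auto
  moreover have "sum f (insert c S1) = f c + sum f S1" using S1 cS1 by simp
  moreover have "sum f S1 = (\<Sum>x\<in>S1. f c)" using eq S1 by (intro sum.cong) auto
  moreover have "(\<Sum>x\<in>S1. f c) = of_nat (j - 1) * f c" using S1 by simp
  ultimately have "f c + of_nat (j - 1) * f c = 0" by simp
  moreover obtain i where ji: "j = Suc i" using j1 by (cases j) auto
  ultimately have "of_nat j * f c = 0" by (simp add: distrib_right)
  thus ?thesis using nat_cancel j1 by blast
qed

lemma Fsum:
  assumes a0: "a0 \<in> NN" and q: "q \<in> NN" "a0 \<noteq> q" and y: "y1 \<in> NN" "y2 \<in> NN" "y1 \<noteq> y2"
    and S: "S \<subseteq> NN - {a0, q}" "card S = k - 1"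
  shows "(\<Sum>c\<in>S. v a0 y1 * v c y2 * v q y1) = 0"
proof -
  define A where "A = NN - {q} - S"
  have fS: "finite S" using S(1) finNN finite_subset by blast
  have cq: "card (NN - {q}) = 2 * k - 2" using cardNN q by (simp add: card_Diff_singleton)
  have "card A = card (NN - {q}) - card S" unfolding A_def using S(1) fS by (intro card_Diff_subset) auto
  hence "card A = k - 1" using cq S(2) k2 by simp
  hence AV: "A \<in> VV" by (auto simp: VV_iff A_def)
  have a0A: "a0 \<in> A" using a0 q S(1) by (auto simp: A_def)
  have qA: "q \<notin> A" by (simp add: A_def)
  have NA: "NN - A = insert q S" using S(1) q by (auto simp: A_def)
  define s1 where "s1 = Q A y1"
  define s2 where "s2 = Q A y2"
  have s1v: "s1 = (\<Sum>a\<in>A. v a y1)" using Q_v[OF AV y(1)] by (simp add: s1_def)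
  have fA: "finite A" using VV_fin[OF AV] .
  have h1: "v a0 y1 * s1 = v a0 y1"
  proof -
    have "v a0 y1 * s1 = (\<Sum>a\<in>A. v a0 y1 * v a y1)" by (simp add: s1v sum_distrib_left)
    also have "\<dots> = v a0 y1 * v a0 y1 + (\<Sum>a\<in>A - {a0}. v a0 y1 * v a y1)"
      using fA a0A by (simp add: sum.remove)
    also have "(\<Sum>a\<in>A - {a0}. v a0 y1 * v a y1) = 0"
    proof (rule sum.neutral, intro ballI)
      fix a assume a: "a \<in> A - {a0}"
      hence "a \<in> NN" using VV_sub[OF AV] by auto
      thus "v a0 y1 * v a y1 = 0" using v_colorth[OF a0 _ _ y(1)] a by auto
    qed
    finally show ?thesis using v_idem[OF a0] by simp
  qed
  have h2: "s1 * v q y1 = 0"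
  proof -
    have "s1 * v q y1 = (\<Sum>a\<in>A. v a y1 * v q y1)" by (simp add: s1v sum_distrib_right)
    also have "\<dots> = 0"
    proof (rule sum.neutral, intro ballI)
      fix a assume a: "a \<in> A"
      hence "a \<in> NN" "a \<noteq> q" using VV_sub[OF AV] qA by auto
      thus "v a y1 * v q y1 = 0" using v_colorth[OF _ q(1) _ y(1)] by auto
    qed
    finally show ?thesis .
  qed
  have s1i: "s1 * s1 = s1" using Q_idem[OF AV] by (simp add: s1_def)
  have s12: "s1 * s2 = s2 * s1" using Q_comm_same[OF AV] by (simp add: s1_def s2_def)
  have h3: "s1 * (1 - s2) * s1 = s1 * (1 - s2)"
  proof -
    have "s1 * (1 - s2) * s1 = s1 * s1 - s1 * (s2 * s1)" by (simp add: algebra_simps)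
    also have "\<dots> = s1 - s1 * s2" by (simp add: s12[symmetric] s1i mult.assoc[symmetric])
    finally show ?thesis by (simp add: algebra_simps)
  qed
  have "v a0 y1 * (1 - s2) * v q y1 = v a0 y1 * s1 * (1 - s2) * v q y1" using h1 by simp
  also have "\<dots> = v a0 y1 * (s1 * (1 - s2) * s1) * v q y1" unfolding h3 by (simp add: mult.assoc)
  also have "\<dots> = v a0 y1 * (s1 * (1 - s2)) * (s1 * v q y1)" by (simp add: mult.assoc)
  also have "\<dots> = 0" by (simp add: h2)
  finally have z: "v a0 y1 * (1 - s2) * v q y1 = 0" .
  have "1 - s2 = (\<Sum>c\<in>insert q S. v c y2)" using Qc_v[OF AV y(2)] NA by (simp add: s2_def)
  hence "v a0 y1 * (1 - s2) * v q y1 = (\<Sum>c\<in>insert q S. v a0 y1 * v c y2 * v q y1)"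
    by (simp add: sum_distrib_left sum_distrib_right)
  also have "\<dots> = v a0 y1 * v q y2 * v q y1 + (\<Sum>c\<in>S. v a0 y1 * v c y2 * v q y1)"
    using fS S(1) by (subst sum.insert) auto
  also have "v a0 y1 * v q y2 * v q y1 = 0"
    using v_roworth[OF q(1) y(2) y(1)] y(3) by (simp add: mult.assoc)
  finally show ?thesis using z by simp
qed

lemma VC_main:
  assumes a0: "a0 \<in> NN" and c: "c \<in> NN" "a0 \<noteq> c" and y: "y1 \<in> NN" "y2 \<in> NN" "y1 \<noteq> y2"
  shows "v a0 y1 * v c y2 = v c y2 * v a0 y1"
proof -
  have Fz: "v a0 y1 * v c y2 * v q y1 = 0" if q: "q \<in> NN - {a0, c}" for q
  proof -
    let ?T = "NN - {a0, q}"
    have qq: "q \<in> NN" "a0 \<noteq> q" "q \<noteq> c" using q by auto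
    have cT: "card ?T = 2 * k - 3" using cardNN a0 qq by (simp add: card_Diff_subset)
    show ?thesis
    proof (rule CLem[where T = ?T and j = "k - 1" and f = "\<lambda>c'. v a0 y1 * v c' y2 * v q y1"])
      show "finite ?T" by simp
      show "\<And>S. S \<subseteq> ?T \<Longrightarrow> card S = k - 1 \<Longrightarrow> (\<Sum>c'\<in>S. v a0 y1 * v c' y2 * v q y1) = 0"
        using Fsum[OF a0 qq(1,2) y] by blast
      show "1 \<le> k - 1" using k2 by simp
      show "k - 1 < card ?T \<or> (k - 1 = 1 \<and> card ?T = 1)" using cT k2 by auto
      show "c \<in> ?T" using c qq by auto
    qed
  qed
  have NNs: "NN = insert a0 (insert c (NN - {a0, c}))" using a0 c by auto
  have t1: "v a0 y1 * v c y2 * v c y1 = 0" using v_roworth[OF c(1) y(2) y(1)] y(3) by (simp add: mult.assoc)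
  have t2: "(\<Sum>q\<in>NN - {a0, c}. v a0 y1 * v c y2 * v q y1) = 0" using Fz by (intro sum.neutral) auto
  have t3: "(\<Sum>q\<in>NN. v a0 y1 * v c y2 * v q y1) =
      v a0 y1 * v c y2 * v a0 y1 + (v a0 y1 * v c y2 * v c y1 + (\<Sum>q\<in>NN - {a0, c}. v a0 y1 * v c y2 * v q y1))"
  proof -
    have "(\<Sum>q\<in>NN. v a0 y1 * v c y2 * v q y1) = (\<Sum>q\<in>insert a0 (insert c (NN - {a0, c})). v a0 y1 * v c y2 * v q y1)"
      using NNs by simp
    also have "\<dots> = v a0 y1 * v c y2 * v a0 y1 + (\<Sum>q\<in>insert c (NN - {a0, c}). v a0 y1 * v c y2 * v q y1)"
      by (rule sum.insert) (use c(2) in auto)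
    also have "(\<Sum>q\<in>insert c (NN - {a0, c}). v a0 y1 * v c y2 * v q y1) =
        v a0 y1 * v c y2 * v c y1 + (\<Sum>q\<in>NN - {a0, c}. v a0 y1 * v c y2 * v q y1)"
      by (rule sum.insert) auto
    finally show ?thesis .
  qed
  have "v a0 y1 * v c y2 = v a0 y1 * v c y2 * (\<Sum>q\<in>NN. v q y1)" using v_colsum[OF y(1)] by simp
  also have "\<dots> = (\<Sum>q\<in>NN. v a0 y1 * v c y2 * v q y1)" by (simp add: sum_distrib_left)
  also have "\<dots> = v a0 y1 * v c y2 * v a0 y1" using t1 t2 t3 by simp
  finally have "v a0 y1 * v c y2 * v a0 y1 = v a0 y1 * v c y2" by simp
  thus ?thesis by (rule selfadj_comm[OF v_star[OF a0] v_star[OF c(1)]])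
qed

lemma VC: assumes "x1 \<in> NN" "x2 \<in> NN" "y1 \<in> NN" "y2 \<in> NN"
  shows "v x1 y1 * v x2 y2 = v x2 y2 * v x1 y1"
proof (cases "x1 = x2")
  case True
  show ?thesis
  proof (cases "y1 = y2")
    case True thus ?thesis using \<open>x1 = x2\<close> by simp
  next
    case False
    have "v x1 y1 * v x1 y2 = 0" "v x1 y2 * v x1 y1 = 0"
      using v_roworth[OF assms(1) assms(3) assms(4) False] v_roworth[OF assms(1) assms(4) assms(3)] False by auto
    thus ?thesis using True by simp
  qed
next
  case False
  show ?thesis
  proof (cases "y1 = y2")
    case True
    have "v x1 y1 * v x2 y1 = 0" "v x2 y1 * v x1 y1 = 0"
      using v_colorth[OF assms(1) assms(2) False assms(3)] v_colorth[OF assms(2) assms(1) _ assms(3)] False by auto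
    thus ?thesis using True by simp
  next
    case False
    thus ?thesis using VC_main assms \<open>x1 \<noteq> x2\<close> by blast
  qed
qed


lemma Q_comm: assumes "A \<in> VV" "B \<in> VV" "y \<in> NN" "y' \<in> NN"
  shows "Q A y * Q B y' = Q B y' * Q A y"
proof -
  have sA: "A \<subseteq> NN" "B \<subseteq> NN" using VV_sub assms by auto
  have "Q A y * Q B y' = (\<Sum>x\<in>A. v x y) * (\<Sum>x'\<in>B. v x' y')" using Q_v assms by simp
  also have "\<dots> = (\<Sum>x\<in>A. \<Sum>x'\<in>B. v x y * v x' y')" by (rule sum_product)
  also have "\<dots> = (\<Sum>x\<in>A. \<Sum>x'\<in>B. v x' y' * v x y)"
    by (intro sum.cong refl) (use VC sA assms in blast)
  also have "\<dots> = (\<Sum>x'\<in>B. \<Sum>x\<in>A. v x' y' * v x y)" by (rule sum.swap)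
  also have "\<dots> = (\<Sum>x'\<in>B. v x' y') * (\<Sum>x\<in>A. v x y)" by (rule sum_product[symmetric])
  also have "\<dots> = Q B y' * Q A y" using Q_v assms by simp
  finally show ?thesis .
qed

definition PA :: "nat set \<Rightarrow> nat set \<Rightarrow> 'a" where "PA A S = (\<Sum>B\<in>{B\<in>VV. S \<subseteq> B}. u A B)"

lemma PA_empty: "A \<in> VV \<Longrightarrow> PA A {} = 1"
  by (simp add: PA_def rowsum)

lemma PA_insert: assumes "A \<in> VV" shows "PA A (insert y S) = PA A S * Q A y"
proof -
  have "PA A S * Q A y = (\<Sum>B\<in>{B\<in>VV. S \<subseteq> B} \<inter> {B\<in>VV. y \<in> B}. u A B)"
    unfolding PA_def Q_def by (rule rowsub[OF assms]) auto
  also have "{B\<in>VV. S \<subseteq> B} \<inter> {B\<in>VV. y \<in> B} = {B\<in>VV. insert y S \<subseteq> B}" by auto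
  finally show ?thesis by (simp add: PA_def)
qed

lemma PA_self: assumes "A \<in> VV" "B \<in> VV" shows "PA A B = u A B"
proof -
  have "{B'\<in>VV. B \<subseteq> B'} = {B}"
  proof
    show "{B'\<in>VV. B \<subseteq> B'} \<subseteq> {B}"
    proof
      fix B' assume B': "B' \<in> {B'\<in>VV. B \<subseteq> B'}"
      hence "B' \<in> VV" "B \<subseteq> B'" by auto
      hence "B = B'" using card_subset_eq[OF VV_fin[of B']] VV_card assms(2) by metis
      thus "B' \<in> {B}" by simp
    qed
    show "{B} \<subseteq> {B'\<in>VV. B \<subseteq> B'}" using assms by auto
  qed
  thus ?thesis by (simp add: PA_def)
qed

lemma comm_PA: assumes "A \<in> VV" "finite S" "S \<subseteq> NN" "\<And>y. y \<in> S \<Longrightarrow> c * Q A y = Q A y * c"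
  shows "c * PA A S = PA A S * c"
  using assms(2,3,4)
proof (induction S rule: finite_induct)
  case empty thus ?case by (simp add: PA_empty[OF assms(1)])
next
  case (insert y S)
  have ih: "c * PA A S = PA A S * c" using insert by auto
  have cy: "c * Q A y = Q A y * c" using insert by auto
  have "c * PA A (insert y S) = (c * PA A S) * Q A y" by (simp add: PA_insert[OF assms(1)] mult.assoc)
  also have "\<dots> = PA A S * (c * Q A y)" by (simp add: ih mult.assoc)
  also have "\<dots> = (PA A S * Q A y) * c" by (simp add: cy mult.assoc)
  finally show ?case by (simp add: PA_insert[OF assms(1)])
qed

lemma final: assumes "i \<in> VV" "j \<in> VV" "p \<in> VV" "q \<in> VV"
  shows "u i j * u p q = u p q * u i j"
proof -
  have fj: "finite j" "j \<subseteq> NN" using VV_fin VV_sub assms by auto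
  have fq: "finite q" "q \<subseteq> NN" using VV_fin VV_sub assms by auto
  have c1: "Q p y' * u i j = u i j * Q p y'" if "y' \<in> NN" for y'
  proof -
    have "Q p y' * PA i j = PA i j * Q p y'"
      by (rule comm_PA[OF assms(1) fj]) (use Q_comm assms that fj in blast)
    thus ?thesis using PA_self[OF assms(1,2)] by simp
  qed
  have "u i j * PA p q = PA p q * u i j"
    by (rule comm_PA[OF assms(3) fq]) (use c1 fq in \<open>metis subsetD\<close>)
  thus ?thesis using PA_self[OF assms(3,4)] by simp
qed

end

theorem theorem1p1:
  fixes k :: nat
    and smult :: "complex \<Rightarrow> 'a::ring_1 \<Rightarrow> 'a"
    and star :: "'a \<Rightarrow> 'a"
    and nrm :: "'a \<Rightarrow> real"
    and u :: "nat set \<Rightarrow> nat set \<Rightarrow> 'a"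
  assumes "k \<ge> 2"
    and "cstar_algebra smult star nrm"
    and "graph_magic_unitary star (odd_graph_vertices k) odd_graph_adj u"
  shows "\<forall>i\<in>odd_graph_vertices k. \<forall>j\<in>odd_graph_vertices k.
         \<forall>p\<in>odd_graph_vertices k. \<forall>q\<in>odd_graph_vertices k.
           u i j * u p q = u p q * u i j"
proof -
  interpret OQ smult star nrm k u
    by (rule OQ.intro[OF assms(2)]) (rule OQ_axioms.intro[OF assms(1) assms(3)])
  show ?thesis using final unfolding VV_def by blast
qed

end
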